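(* For $\mu\ge\lambda>0$ let \[\kappa(\lambda,\mu)=\frac\mu\lambda-\Big(\sqrt2\Big(\frac\mu\lambda-\frac12\Big)^{1/2}-\lambda^{1/2}\Big)^2-(1-\mu^{1/2})^2.\] For every $0<\lambda\le\mu$ such that $\kappa(\lambda,\mu)>0$, there exist a path $\gamma(t)=(\gamma_X(t),\gamma_Y(t))$, $t\in[0,1]$, and $\kappa_0>0$ such that (i) $\gamma(0)=(1/2,1/2)$ and $\gamma(1)=(\lambda,\mu)$; (ii) $\kappa(\gamma(t))\ge\kappa_0>0$ for all $t\in[0,1]$; (iii) $\gamma$ is piecewise linear and $|\gamma_X'(t)|\le20$ and $|\gamma_Y'(t)|\le20$ for all $t\in[0,1]$ at which $\gamma$ is differentiable; (iv) $\gamma_X(t)\in[3/2-\sqrt2,10]$ and $\gamma_Y(t)\in[3/2-\sqrt2,10]$ for all $t\in[0,1]$. *)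

theory Defs
  imports "HOL-Analysis.Analysis"
begin

definition kappa :: "real \<Rightarrow> real \<Rightarrow> real" where
  "kappa l m = m / l - (sqrt 2 * sqrt (m / l - 1/2) - sqrt l)^2 - (1 - sqrt m)^2"

definition piecewise_linear_on :: "real \<Rightarrow> real \<Rightarrow> (real \<Rightarrow> 'a::real_vector) \<Rightarrow> bool" where
  "piecewise_linear_on a b g \<longleftrightarrow>
     (\<exists>ts :: real list. length ts \<ge> 2 \<and> sorted_wrt (<) ts \<and> hd ts = a \<and> last ts = b \<and>
        (\<forall>i < length ts - 1. \<exists>u v. \<forall>t \<in> {ts ! i .. ts ! Suc i}. g t = u + t *\<^sub>R v))"

end

theory Submission
  imports Defs
begin

lemma kappa_alt:
  assumes "0 < l" "l \<le> m"
  shows "kappa l m = 2 * sqrt (2*m - l) + 2 * sqrt m - l - m - m / l"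
proof -
  have m0: "0 \<le> m" using assms by simp
  have a: "0 \<le> m / l - 1/2" using assms by (simp add: field_simps)
  have "sqrt 2 * sqrt (m / l - 1/2) * sqrt l = sqrt (2*m - l)"
    using assms by (simp add: real_sqrt_mult[symmetric] field_simps)
  moreover have "(sqrt 2 * sqrt (m / l - 1/2))^2 = 2 * (m/l - 1/2)"
    using a by (simp add: power_mult_distrib)
  moreover have "(sqrt l)^2 = l" "(sqrt m)^2 = m" using assms by auto
  ultimately show ?thesis unfolding kappa_def power2_diff
    by (simp add: algebra_simps)
qed

lemma sqrt_conc:
  fixes x y t :: real
  assumes "0 \<le> x" "0 \<le> y" "0 \<le> t" "t \<le> 1"
  shows "(1-t) * sqrt x + t * sqrt y \<le> sqrt ((1-t)*x + t*y)"
proof (rule real_le_rsqrt)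
  have "((1-t) * sqrt x + t * sqrt y)^2 = (1-t)^2 * x + t^2 * y + 2*(1-t)*t* sqrt x * sqrt y"
    using assms by (simp add: power2_eq_square algebra_simps)
  also have "\<dots> = (1-t)*x + t*y - t*(1-t)*(sqrt x - sqrt y)^2"
    using assms by (simp add: power2_eq_square algebra_simps)
  also have "\<dots> \<le> (1-t)*x + t*y" using assms by simp
  finally show "((1-t) * sqrt x + t * sqrt y)^2 \<le> (1-t)*x + t*y" .
qed

lemma frac_conc:
  fixes l1 l2 m1 m2 t :: real
  assumes l1: "0 < l1" and l2: "0 < l2" and t: "0 \<le> t" "t \<le> 1"
    and c: "(l1 - l2) * (m2 * l1 - m1 * l2) \<ge> 0"
  shows "((1-t)*m1 + t*m2) / ((1-t)*l1 + t*l2) \<le> (1-t)*(m1/l1) + t*(m2/l2)"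
proof -
  define l where "l = (1-t)*l1 + t*l2"
  have lpos: "0 < l"
  proof (cases "t = 1")
    case True thus ?thesis using l2 by (simp add: l_def)
  next
    case False
    hence "0 < (1-t)*l1" using t l1 by simp
    moreover have "0 \<le> t*l2" using t l2 by simp
    ultimately show ?thesis unfolding l_def by linarith
  qed
  have id: "l * ((1-t)*m1*l2 + t*m2*l1) - ((1-t)*m1 + t*m2) * l1 * l2
        = t*(1-t)*((l1 - l2) * (m2 * l1 - m1 * l2))"
    unfolding l_def by (simp add: algebra_simps)
  have "t*(1-t)*((l1 - l2) * (m2 * l1 - m1 * l2)) \<ge> 0" using t c by simp
  hence "((1-t)*m1 + t*m2) * (l1 * l2) \<le> l * ((1-t)*m1*l2 + t*m2*l1)"
    using id by (simp add: algebra_simps)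
  hence "((1-t)*m1 + t*m2) / l \<le> ((1-t)*m1*l2 + t*m2*l1) / (l1*l2)"
    using lpos l1 l2 by (simp add: divide_simps mult.commute mult.left_commute)
  also have "\<dots> = (1-t)*(m1/l1) + t*(m2/l2)" using l1 l2 by (simp add: field_simps)
  finally show ?thesis unfolding l_def .
qed

lemma seg:
  fixes l1 m1 l2 m2 t :: real
  assumes p: "0 < l1" "l1 \<le> m1" and q: "0 < l2" "l2 \<le> m2"
    and c: "(l1 - l2) * (m2 * l1 - m1 * l2) \<ge> 0" and t: "0 \<le> t" "t \<le> 1"
  shows "0 < (1-t)*l1 + t*l2 \<and> (1-t)*l1 + t*l2 \<le> (1-t)*m1 + t*m2 \<and>
     (1-t) * kappa l1 m1 + t * kappa l2 m2 \<le> kappa ((1-t)*l1 + t*l2) ((1-t)*m1 + t*m2)"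
proof -
  define l where "l = (1-t)*l1 + t*l2"
  define m where "m = (1-t)*m1 + t*m2"
  have lpos: "0 < l"
  proof (cases "t = 1")
    case True thus ?thesis using q by (simp add: l_def)
  next
    case False
    hence "0 < (1-t)*l1" using t p by simp
    moreover have "0 \<le> t*l2" using t q by simp
    ultimately show ?thesis unfolding l_def by linarith
  qed
  have "(1-t)*l1 \<le> (1-t)*m1" using t p by (simp add: mult_left_mono)
  moreover have "t*l2 \<le> t*m2" using t q by (simp add: mult_left_mono)
  ultimately have lm: "l \<le> m" unfolding l_def m_def by linarith
  have s1: "(1-t) * sqrt (2*m1 - l1) + t * sqrt (2*m2-l2) \<le> sqrt (2*m - l)"
  proof -
    have "2*m - l = (1-t)*(2*m1-l1) + t*(2*m2-l2)" unfolding l_def m_def by (simp add: algebra_simps)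
    thus ?thesis using sqrt_conc[of "2*m1-l1" "2*m2-l2" t] p q t by simp
  qed
  have s2: "(1-t) * sqrt m1 + t * sqrt m2 \<le> sqrt m"
    unfolding m_def using sqrt_conc[of m1 m2 t] p q t by simp
  have f: "m / l \<le> (1-t)*(m1/l1) + t*(m2/l2)"
    unfolding m_def l_def using frac_conc[OF p(1) q(1) t c] .
  have "(1-t) * kappa l1 m1 + t * kappa l2 m2
     = 2 * ((1-t) * sqrt (2*m1 - l1) + t * sqrt (2*m2-l2)) + 2 * ((1-t) * sqrt m1 + t * sqrt m2)
       - l - m - ((1-t)*(m1/l1) + t*(m2/l2))"
    unfolding kappa_alt[OF p] kappa_alt[OF q] l_def m_def by (simp add: algebra_simps)
  also have "\<dots> \<le> 2 * sqrt (2*m - l) + 2 * sqrt m - l - m - m / l"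
    using add_mono[OF mult_left_mono[OF s1, of 2] mult_left_mono[OF s2, of 2]] f by simp
  also have "\<dots> = kappa l m" using kappa_alt[OF lpos lm] by simp
  finally show ?thesis using lpos lm unfolding l_def m_def by simp
qed

lemma bounds:
  fixes l m :: real
  assumes p: "0 < l" "l \<le> m" and k: "0 < kappa l m"
  shows "3/2 - sqrt 2 \<le> l \<and> m \<le> 8"
proof
  have kk: "kappa l m = 2 * sqrt (2*m - l) + 2 * sqrt m - l - m - m / l" using kappa_alt[OF p] .
  define s where "s = sqrt l"
  have s0: "0 < s" using p unfolding s_def by simp
  have ls: "l = s^2" using p unfolding s_def by simp
  have m0: "0 < m" using p by simp
  have amgm: "2 * sqrt m \<le> l + m / l"
  proof -
    have "0 \<le> (s - sqrt m / s)^2" by simp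
    also have "\<dots> = s^2 - 2 * sqrt m + (sqrt m)^2 / s^2" using s0 by (simp add: power2_diff field_simps power2_eq_square)
    also have "\<dots> = l - 2 * sqrt m + m / l" using ls m0 by simp
    finally show ?thesis by simp
  qed
  show "m \<le> 8"
  proof (rule ccontr)
    assume "\<not> m \<le> 8"
    hence m8: "8 < m" by simp
    have "sqrt (2*m - l) \<le> sqrt 2 * sqrt m" using p by (simp add: real_sqrt_mult[symmetric])
    hence "0 < 2 * sqrt 2 * sqrt m - m" using kk k amgm by linarith
    also have "2 * sqrt 2 * sqrt m - m = sqrt m * (2 * sqrt 2 - sqrt m)" using m0 by (simp add: algebra_simps)
    finally have "sqrt m < 2 * sqrt 2" using m0
      by (simp add: zero_less_mult_iff)
    hence "(sqrt m)^2 < (2 * sqrt 2)^2" using m0 by (intro power_strict_mono) auto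
    hence "m < 8" using m0 by (simp add: power_mult_distrib)
    thus False using m8 by simp
  qed
  show "3/2 - sqrt 2 \<le> l"
  proof (rule ccontr)
    assume "\<not> 3/2 - sqrt 2 \<le> l"
    hence "s^2 < (1 - sqrt 2 / 2)^2" using ls by (simp add: power2_diff algebra_simps power_divide)
    hence ss: "s < 1 - sqrt 2 / 2" using s0 power_less_imp_less_base by (metis diff_ge_0_iff_ge less_le_not_le nle_le sqrt2_less_2 zero_le_numeral divide_le_eq_1 less_eq_real_def)
    have "1.4 < sqrt 2" by (rule real_less_rsqrt) (auto simp: power2_eq_square)
    hence s3: "s < 3/10" using ss by simp
    have A: "sqrt (2*m - l) \<le> m / s"
    proof (rule real_le_lsqrt)
      show "0 \<le> m / s" using s0 m0 by simp
      have "(m/s)^2 - (2*m - l) = (m - l)^2 / l" using ls s0 by (simp add: field_simps power2_eq_square)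
      moreover have "0 \<le> (m - l)^2 / l" using p by simp
      ultimately show "2*m - l \<le> (m/s)^2" by linarith
    qed
    have B: "sqrt m \<le> (l + m) / (2* s)"
    proof -
      have "0 \<le> (s - sqrt m)^2" by simp
      hence "2* s* sqrt m \<le> l + m" using ls m0 by (simp add: power2_diff)
      thus ?thesis using s0 by (simp add: field_simps)
    qed
    have "0 < 2*(m/s) + 2*((l+m)/(2* s)) - l - m - m/l" using kk k A B by linarith
    hence "0 < s^2 * (2*(m/s) + 2*((l+m)/(2* s)) - l - m - m/l)" using s0 by simp
    also have "s^2 * (2*(m/s) + 2*((l+m)/(2* s)) - l - m - m/l) = m * (3* s - s^2 - 1) + s^2 * (s - s^2)"
      unfolding ls using s0 by (simp add: field_simps power2_eq_square)
    also have "\<dots> \<le> s^2 * (3* s - s^2 - 1) + s^2 * (s - s^2)"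
    proof -
      have "0 \<le> s^2" by simp
      hence "3* s - s^2 - 1 \<le> 0" using s3 by linarith
      thus ?thesis using p ls by (simp add: mult_right_mono_neg)
    qed
    also have "\<dots> = s^2 * (1 - 2 * (s - 1)^2)" by (simp add: power2_eq_square algebra_simps)
    finally have "0 < 1 - 2 * (s - 1)^2" using s0 by (simp add: zero_less_mult_iff)
    moreover have "(1 - s)^2 > (sqrt 2 / 2)^2" using ss by (intro power_strict_mono) auto
    moreover have "(sqrt 2 / 2)^2 = 1/2" by (simp add: power_divide)
    ultimately show False by (simp add: power2_commute)
  qed
qed

lemma seg_pair:
  fixes A B :: "real \<times> real" and u :: real
  assumes "0 < fst A" "fst A \<le> snd A" "0 < fst B" "fst B \<le> snd B"
    and "(fst A - fst B) * (snd B * fst A - snd A * fst B) \<ge> 0" and "0 \<le> u" "u \<le> 1"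
  shows "0 < (1-u)*fst A + u*fst B \<and> (1-u)*fst A + u*fst B \<le> (1-u)* snd A + u* snd B \<and>
    min (kappa (fst A) (snd A)) (kappa (fst B) (snd B)) \<le> kappa ((1-u)*fst A + u*fst B) ((1-u)* snd A + u* snd B)"
proof -
  have *: "min x y \<le> (1-u)*x + u*y" for x y :: real
  proof -
    have "(1-u)*min x y \<le> (1-u)*x" using assms by (intro mult_left_mono) auto
    moreover have "u*min x y \<le> u*y" using assms by (intro mult_left_mono) auto
    ultimately show ?thesis by (simp add: algebra_simps)
  qed
  show ?thesis using seg[OF assms] *[of "kappa (fst A) (snd A)" "kappa (fst B) (snd B)"] by linarith
qed

lemma lin_deriv: "((\<lambda>t. u + t *\<^sub>R v) has_vector_derivative v) (at x within X)"
  by (auto intro!: derivative_eq_intros)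

lemma kappa_S: "0 < kappa (1/2) (1/2)"
proof -
  have "1/2 < sqrt (1/2::real)" by (rule real_less_rsqrt) (simp add: power2_eq_square)
  thus ?thesis using kappa_alt[of "1/2" "1/2"] by simp
qed

lemma deriv_piece:
  fixes g :: "real \<Rightarrow> real \<times> real"
  assumes "c < d" "{c..d} \<subseteq> {0..1}" "t \<in> {c..d}"
    and "\<And>x. x \<in> {c..d} \<Longrightarrow> g x = u + x *\<^sub>R v"
    and "(g has_vector_derivative (a, b)) (at t within {0..1})"
  shows "(a, b) = v"
proof -
  have D: "(g has_vector_derivative (a, b)) (at t within {c..d})"
    using has_vector_derivative_within_subset[OF assms(5,2)] .
  have "((\<lambda>x. u + x *\<^sub>R v) has_vector_derivative (a, b)) (at t within {c..d})"
    apply (rule has_vector_derivative_transform[OF assms(3) _ D]) using assms(4) by simp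
  thus ?thesis using vector_derivative_unique_within_closed_interval[of c d t "\<lambda>x. u + x *\<^sub>R v" "(a,b)" v]
    assms(1,3) lin_deriv by auto
qed

lemma path_main:
  fixes lam mu :: real and P :: "real \<times> real"
  assumes T: "0 < lam" "lam \<le> mu" "kappa lam mu > 0"
    and P: "0 < fst P" "fst P \<le> snd P" "kappa (fst P) (snd P) > 0"
    and cSP: "(1/2 - fst P) * (snd P * (1/2) - (1/2) * fst P) \<ge> 0"
    and cPT: "(fst P - lam) * (mu * fst P - snd P * lam) \<ge> 0"
  shows "\<exists>(\<gamma> :: real \<Rightarrow> real \<times> real) \<kappa>0.
           \<kappa>0 > 0 \<and>
           \<gamma> 0 = (1/2, 1/2) \<and> \<gamma> 1 = (lam, mu) \<and>
           (\<forall>t \<in> {0..1}. 0 < fst (\<gamma> t) \<and> fst (\<gamma> t) \<le> snd (\<gamma> t) \<and>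
                           kappa (fst (\<gamma> t)) (snd (\<gamma> t)) \<ge> \<kappa>0) \<and>
           piecewise_linear_on 0 1 \<gamma> \<and>
           (\<forall>t \<in> {0..1}. \<forall>a b. (\<gamma> has_vector_derivative (a, b)) (at t within {0..1})
                \<longrightarrow> \<bar>a\<bar> \<le> 20 \<and> \<bar>b\<bar> \<le> 20) \<and>
           (\<forall>t \<in> {0..1}. fst (\<gamma> t) \<in> {3/2 - sqrt 2 .. 10} \<and> snd (\<gamma> t) \<in> {3/2 - sqrt 2 .. 10})"
proof -
  define S :: "real \<times> real" where "S = (1/2, 1/2)"
  define Q :: "real \<times> real" where "Q = (lam, mu)"
  define g :: "real \<Rightarrow> real \<times> real" where
    "g t = (if t \<le> 1/2 then (1 - 2*t) *\<^sub>R S + (2*t) *\<^sub>R P else (2 - 2*t) *\<^sub>R P + (2*t - 1) *\<^sub>R Q)" for t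
  define k0 where "k0 = min (kappa (1/2) (1/2)) (min (kappa (fst P) (snd P)) (kappa lam mu))"
  have k0: "0 < k0" unfolding k0_def using kappa_S P T by simp
  have g0: "g 0 = (1/2, 1/2)" unfolding g_def S_def by simp
  have g1: "g 1 = (lam, mu)" unfolding g_def Q_def by simp
  have good: "0 < fst (g t) \<and> fst (g t) \<le> snd (g t) \<and> k0 \<le> kappa (fst (g t)) (snd (g t))"
    if t: "t \<in> {0..1}" for t
  proof (cases "t \<le> 1/2")
    case True
    have "0 \<le> 2*t" "2*t \<le> 1" using t True by auto
    from seg_pair[of S P "2*t", OF _ _ P(1,2) _ this] cSP
    have "0 < (1 - 2*t) * fst S + 2*t * fst P \<and> (1 - 2*t) * fst S + 2*t * fst P \<le> (1 - 2*t) * snd S + 2*t * snd P \<and>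
      min (kappa (fst S) (snd S)) (kappa (fst P) (snd P)) \<le> kappa ((1 - 2*t) * fst S + 2*t * fst P) ((1 - 2*t) * snd S + 2*t * snd P)"
      unfolding S_def by simp
    moreover have "g t = ((1 - 2*t) * fst S + 2*t * fst P, (1 - 2*t) * snd S + 2*t * snd P)"
      unfolding g_def using True by (simp add: prod_eq_iff)
    moreover have "k0 \<le> min (kappa (fst S) (snd S)) (kappa (fst P) (snd P))" unfolding k0_def S_def by simp
    ultimately show ?thesis by (metis (no_types, lifting) fst_conv snd_conv order_trans)
  next
    case False
    have "0 \<le> 2*t - 1" "2*t - 1 \<le> 1" using t False by auto
    from seg_pair[of P Q "2*t - 1", OF P(1,2) _ _ _ this] cPT T
    have "0 < (1 - (2*t-1)) * fst P + (2*t-1) * fst Q \<and> (1 - (2*t-1)) * fst P + (2*t-1) * fst Q \<le> (1 - (2*t-1)) * snd P + (2*t-1) * snd Q \<and>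
      min (kappa (fst P) (snd P)) (kappa (fst Q) (snd Q)) \<le> kappa ((1 - (2*t-1)) * fst P + (2*t-1) * fst Q) ((1 - (2*t-1)) * snd P + (2*t-1) * snd Q)"
      unfolding Q_def by simp
    moreover have "g t = ((1 - (2*t-1)) * fst P + (2*t-1) * fst Q, (1 - (2*t-1)) * snd P + (2*t-1) * snd Q)"
      unfolding g_def using False by (simp add: prod_eq_iff algebra_simps)
    moreover have "k0 \<le> min (kappa (fst P) (snd P)) (kappa (fst Q) (snd Q))" unfolding k0_def Q_def by (simp add: min.coboundedI2)
    ultimately show ?thesis by (metis (no_types, lifting) fst_conv snd_conv order_trans)
  qed
  have bnd: "fst (g t) \<in> {3/2 - sqrt 2 .. 8} \<and> snd (g t) \<in> {3/2 - sqrt 2 .. 8}" if t: "t \<in> {0..1}" for t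
    using good[OF t] k0 bounds[of "fst (g t)" "snd (g t)"] by auto
  have Pb: "fst P \<in> {3/2 - sqrt 2 .. 8} \<and> snd P \<in> {3/2 - sqrt 2 .. 8}"
    using bnd[of "1/2"] unfolding g_def S_def by simp
  have Tb: "lam \<in> {3/2 - sqrt 2 .. 8} \<and> mu \<in> {3/2 - sqrt 2 .. 8}"
    using bnd[of 1] g1 by simp
  have sq: "0 \<le> 3/2 - sqrt 2"
  proof -
    have "sqrt 2 < 1.5" by (rule real_less_lsqrt) (auto simp: power2_eq_square)
    thus ?thesis by simp
  qed
  have pl1: "g x = S + x *\<^sub>R (2 *\<^sub>R (P - S))" if "x \<in> {0..1/2}" for x
    using that unfolding g_def by (simp add: algebra_simps)
  have pl2: "g x = (2 *\<^sub>R P - Q) + x *\<^sub>R (2 *\<^sub>R (Q - P))" if "x \<in> {1/2..1}" for x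
  proof (cases "x = 1/2")
    case True thus ?thesis unfolding g_def by (simp add: prod_eq_iff algebra_simps)
  next
    case False thus ?thesis using that unfolding g_def by (simp add: algebra_simps)
  qed
  have pw: "piecewise_linear_on 0 1 g"
    unfolding piecewise_linear_on_def
  proof (intro exI[of _ "[0, 1/2, 1]"] conjI allI impI)
    fix i assume "i < length [0::real, 1/2, 1] - 1"
    hence "i = 0 \<or> i = 1" by auto
    thus "\<exists>u v. \<forall>t\<in>{[0::real, 1/2, 1] ! i..[0, 1/2, 1] ! Suc i}. g t = u + t *\<^sub>R v"
    proof
      assume i: "i = 0"
      show ?thesis unfolding i
        by (rule exI[of _ S], rule exI[of _ "2 *\<^sub>R (P - S)"]) (use pl1 in simp)
    next
      assume i: "i = 1"
      show ?thesis unfolding i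
        by (rule exI[of _ "2 *\<^sub>R P - Q"], rule exI[of _ "2 *\<^sub>R (Q - P)"]) (use pl2 in simp)
    qed
  qed auto
  have der: "\<bar>a\<bar> \<le> 20 \<and> \<bar>b\<bar> \<le> 20"
    if t: "t \<in> {0..1}" and d: "(g has_vector_derivative (a, b)) (at t within {0..1})" for t a b
  proof (cases "t \<le> 1/2")
    case True
    have "(a, b) = 2 *\<^sub>R (P - S)"
      by (rule deriv_piece[where c=0 and d="1/2" and u=S]) (use t True pl1 d in auto)
    hence "a = 2 * (fst P - 1/2)" "b = 2 * (snd P - 1/2)" unfolding S_def by (auto simp: prod_eq_iff)
    thus ?thesis using Pb sq by auto
  next
    case False
    have "(a, b) = 2 *\<^sub>R (Q - P)"
      by (rule deriv_piece[where c="1/2" and d=1 and u="2 *\<^sub>R P - Q"]) (use t False pl2 d in auto)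
    hence "a = 2 * (lam - fst P)" "b = 2 * (mu - snd P)" unfolding Q_def by (auto simp: prod_eq_iff)
    thus ?thesis using Pb Tb sq by auto
  qed
  show ?thesis
    apply (rule exI[of _ g], rule exI[of _ k0])
    using k0 g0 g1 good pw der bnd by fastforce
qed

lemma sqrt_half2: "0 \<le> x \<Longrightarrow> 2 * sqrt (x/2) = sqrt 2 * sqrt x"
proof -
  assume "0 \<le> x"
  have "2 * sqrt (x/2) = 2 * sqrt x / sqrt 2" by (simp add: real_sqrt_divide)
  also have "\<dots> = sqrt 2 * sqrt x"
    by (simp add: field_simps)
  finally show ?thesis .
qed

lemma r4_arith: "(r::real) \<le> 4 \<Longrightarrow> r + (1+r)/2 \<le> 1.4 * (1 + r)" by simp

lemma big_case:
  fixes lam mu :: real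
  assumes T: "2 \<le> lam" "lam \<le> mu" "kappa lam mu > 0"
  shows "0 < kappa (1/2) (mu / (2*lam))"
proof -
  define r where "r = mu / lam"
  define s where "s = sqrt lam"
  have l0: "0 < lam" using T by simp
  have r1: "1 \<le> r" unfolding r_def using T by simp
  have r4: "r \<le> 4"
  proof -
    have "mu \<le> 8" using bounds[of lam mu] T by simp
    hence "mu \<le> 4 * lam" using T by simp
    thus ?thesis unfolding r_def using l0 by (simp add: field_simps)
  qed
  have mu: "mu = s^2 * r" unfolding r_def s_def using l0 by simp
  have lam: "lam = s^2" unfolding s_def using l0 by simp
  have s2: "sqrt 2 \<le> s" unfolding s_def using T by simp
  have s0: "0 \<le> s" unfolding s_def using l0 by simp
  define a where "a = sqrt (2*r - 1) + sqrt r"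
  have k1: "kappa lam mu = 2 * s * a - s^2 * (1 + r) - r"
  proof -
    have "2*mu - lam = s^2 * (2*r - 1)" unfolding mu lam by (simp add: algebra_simps)
    hence "sqrt (2*mu - lam) = s * sqrt (2*r - 1)"
      using s0 by (simp add: real_sqrt_mult)
    moreover have "sqrt mu = s * sqrt r" unfolding mu using s0 by (simp add: real_sqrt_mult)
    moreover have "mu / lam = r" unfolding r_def ..
    ultimately have "kappa lam mu = 2 * (s * sqrt (2*r - 1)) + 2 * (s * sqrt r) - lam - mu - r"
      using kappa_alt[OF l0 T(2)] by simp
    also have "\<dots> = 2 * s * a - s^2 * (1 + r) - r" unfolding a_def
      using mu lam by (simp add: algebra_simps)
    finally show ?thesis .
  qed
  have k2: "kappa (1/2) (mu / (2*lam)) = sqrt 2 * a - (3*r + 1)/2"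
  proof -
    have e: "mu / (2*lam) = r/2" unfolding r_def by simp
    have "2 * sqrt (2*(r/2) - 1/2) = sqrt 2 * sqrt (2*r - 1)"
      using sqrt_half2[of "2*r - 1"] r1 by (simp add: field_simps)
    moreover have "2 * sqrt (r/2) = sqrt 2 * sqrt r" using sqrt_half2[of r] r1 by simp
    moreover have "kappa (1/2) (r/2) = 2 * sqrt (2*(r/2) - 1/2) + 2 * sqrt (r/2) - 1/2 - r/2 - (r/2)/(1/2)"
      using kappa_alt[of "1/2" "r/2"] r1 by simp
    ultimately show ?thesis unfolding e a_def by (simp add: algebra_simps add_divide_distrib)
  qed
  have abound: "a \<le> sqrt 2 * (1 + r)"
  proof -
    have "0 \<le> (r - 1)^2" by simp
    hence "2*r - 1 \<le> r^2" by (simp add: power2_diff)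
    hence "sqrt (2*r - 1) \<le> r"
      using r1 by (intro real_le_lsqrt) auto
    moreover have "sqrt r \<le> (1 + r)/2"
    proof -
      have "0 \<le> (1 - sqrt r)^2" by simp
      thus ?thesis using r1 by (simp add: power2_diff)
    qed
    moreover have "1.4 \<le> sqrt 2" by (rule real_le_rsqrt) (auto simp: power2_eq_square)
    hence "1.4 * (1 + r) \<le> sqrt 2 * (1 + r)" using r1 by (intro mult_right_mono) auto
    ultimately show ?thesis unfolding a_def using r4
      by (metis (no_types) add_mono order_trans[of _ "r + (1+r)/2"] order_trans
          [of "r + (1+r)/2" "1.4 * (1 + r)"] \<open>1.4 * (1 + r) \<le> sqrt 2 * (1 + r)\<close>
          \<open>sqrt (2*r - 1) \<le> r\<close> \<open>sqrt r \<le> (1 + r)/2\<close> r4_arith)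
  qed
  have key: "(2 * sqrt 2 * a - 3*r - 2) - (2 * s * a - s^2 * (1 + r) - r)
      = (sqrt 2 - s) * (2*a - (sqrt 2 + s) * (1 + r))"
    by (simp add: algebra_simps power2_eq_square)
  have "0 \<le> (sqrt 2 - s) * (2*a - (sqrt 2 + s) * (1 + r))"
  proof (rule mult_nonpos_nonpos)
    show "sqrt 2 - s \<le> 0" using s2 by simp
    have "sqrt 2 * (1 + r) \<le> s * (1 + r)" using s2 r1 by (intro mult_right_mono) auto
    thus "2*a - (sqrt 2 + s) * (1 + r) \<le> 0" using abound by (simp add: algebra_simps)
  qed
  hence "0 < 2 * sqrt 2 * a - 3*r - 2" using key k1 T(3) by linarith
  thus ?thesis unfolding k2 by simp
qed

lemma mid_case:
  fixes lam :: real
  assumes "1/2 < lam" "lam \<le> 2"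
  shows "0 < kappa lam lam"
proof -
  obtain q where q: "q = lam * lam" by simp
  have "0 \<le> (lam - 1/2) * (2 - lam)" using assms by simp
  moreover have "(lam - 1/2) * (2 - lam) = 5/2*lam - q - 1" unfolding q by (simp add: field_simps)
  ultimately have h: "0 \<le> 5/2*lam - q - 1" by simp
  have "((2*lam + 1)/4)^2 = (4*q + 4*lam + 1)/16" unfolding q by (simp add: power2_eq_square field_simps)
  moreover have "(4*q + 4*lam + 1)/16 < lam" using h assms by simp
  ultimately have "((2*lam + 1)/4)^2 < lam" by simp
  hence "(2*lam + 1)/4 < sqrt lam" by (rule real_less_rsqrt)
  thus ?thesis using kappa_alt[of lam lam] assms by simp
qed

theorem lemma5p5:
  fixes lam mu :: real
  assumes "0 < lam" and "lam \<le> mu" and "kappa lam mu > 0"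
  shows "\<exists>(\<gamma> :: real \<Rightarrow> real \<times> real) \<kappa>0.
           \<kappa>0 > 0 \<and>
           \<gamma> 0 = (1/2, 1/2) \<and> \<gamma> 1 = (lam, mu) \<and>
           (\<forall>t \<in> {0..1}. 0 < fst (\<gamma> t) \<and> fst (\<gamma> t) \<le> snd (\<gamma> t) \<and>
                           kappa (fst (\<gamma> t)) (snd (\<gamma> t)) \<ge> \<kappa>0) \<and>
           piecewise_linear_on 0 1 \<gamma> \<and>
           (\<forall>t \<in> {0..1}. \<forall>a b. (\<gamma> has_vector_derivative (a, b)) (at t within {0..1})
                \<longrightarrow> \<bar>a\<bar> \<le> 20 \<and> \<bar>b\<bar> \<le> 20) \<and>
           (\<forall>t \<in> {0..1}. fst (\<gamma> t) \<in> {3/2 - sqrt 2 .. 10} \<and> snd (\<gamma> t) \<in> {3/2 - sqrt 2 .. 10})"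
proof -
  consider (a) "lam \<le> 1/2" | (b) "1/2 < lam" "lam \<le> 2" | (c) "2 < lam" by linarith
  thus ?thesis
  proof cases
    case a
    show ?thesis
    proof (rule path_main[OF assms, of "(1/2, 1/2)"])
      show "0 \<le> (fst (1/2::real, 1/2::real) - lam) * (mu * fst (1/2::real, 1/2::real) - snd (1/2::real, 1/2::real) * lam)"
        using a assms by (simp add: mult_nonneg_nonneg)
    qed (use kappa_S in auto)
  next
    case b
    show ?thesis
    proof (rule path_main[OF assms, of "(lam, lam)"])
      show "0 < kappa (fst (lam, lam)) (snd (lam, lam))" using mid_case[OF b] by simp
    qed (use b in auto)
  next
    case c
    have k: "0 < kappa (1/2) (mu / (2*lam))" using big_case[of lam mu] c assms by simp
    have m: "1/2 \<le> mu / (2*lam)" using c assms by (simp add: field_simps)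
    show ?thesis
    proof (rule path_main[OF assms, of "(1/2, mu / (2*lam))"])
      show "0 \<le> (fst (1/2::real, mu / (2*lam)) - lam) * (mu * fst (1/2::real, mu / (2*lam)) - snd (1/2::real, mu / (2*lam)) * lam)"
        using c by simp
    qed (use k m in auto)
  qed
qed

end
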